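(* Let $\gamma_1=\gamma_2=\frac\pi4$ and for real $x_1,x_2$ with $x_1^2+x_2^2+\frac19\le1$ let $\rho(x_1,x_2)=\frac12\big(\Sigma_0+x_1\Sigma_1+x_2\Sigma_2-\frac13\Sigma_3\big)$. Then $g(\rho(x_1,x_2))>g(\rho(0,0))=\frac49$ whenever $x_1^2+x_2^2>0$. (Here $\rho(0,0)=\frac13|00\rangle\langle00|+\frac23|\psi^+\rangle\langle\psi^+|$ with $|\psi^+\rangle=\frac1{\sqrt2}(|01\rangle+|10\rangle)$, the two-qubit reduced state of the W state.)
   Context: On two qubits, let $\sigma_1,\sigma_2,\sigma_3$ denote the Pauli matrices on the first qubit and $\tau_1,\tau_2,\tau_3$ those on the second. For parameters $\gamma_1,\gamma_2$ set $u=\cos\gamma_1\cos\gamma_2$, $v=\sin\gamma_1\sin\gamma_2$, $z_1=\sin\gamma_1\cos\gamma_2$, $z_2=\cos\gamma_1\sin\gamma_2$, and define $\Sigma_0=\frac12(I+u\sigma_3+v\tau_3+z_1\sigma_1\tau_1+z_2\sigma_2\tau_2)$, $\Sigma_1=\frac12(\sin\gamma_1\sigma_1+\cos\gamma_2\tau_1+\sin\gamma_2\sigma_1\tau_3+\cos\gamma_1\sigma_3\tau_1)$, $\Sigma_2=\frac12(\sin\gamma_2\sigma_2+\cos\gamma_1\tau_2+\sin\gamma_1\sigma_2\tau_3+\cos\gamma_2\sigma_3\tau_2)$, $\Sigma_3=\frac12(v\sigma_3+u\tau_3-z_2\sigma_1\tau_1-z_1\sigma_2\tau_2+\sigma_3\tau_3)$.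 For a two-qubit density matrix $\rho$, $g(\rho):=\max\operatorname{tr}[\rho(\rho_1\otimes\rho_2)]$ over all pure single-qubit states $\rho_1,\rho_2$. *)

theory Defs
  imports "HOL-Analysis.Analysis"
begin

text \<open>Single-qubit operators are functions nat => nat => complex on the index set {0,1}
  (computational basis |0>, |1>); two-qubit operators are indexed by pairs (i,k) meaning |i k>,
  first component = first qubit. Entries outside the index range are 0.\<close>

type_synonym qmat = "nat \<Rightarrow> nat \<Rightarrow> complex"
type_synonym qqmat = "nat \<times> nat \<Rightarrow> nat \<times> nat \<Rightarrow> complex"

definition idx1 :: "nat set" where "idx1 = {0..<2}"
definition idx2 :: "(nat \<times> nat) set" where "idx2 = idx1 \<times> idx1"

definition id1 :: qmat where
  "id1 = (\<lambda>i j. if i < 2 \<and> j < 2 \<and> i = j then 1 else 0)"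

definition pauli :: "nat \<Rightarrow> qmat" where
  "pauli k = (\<lambda>i j. if i < 2 \<and> j < 2 then
      (if k = 1 then (if i \<noteq> j then 1 else 0)
       else if k = 2 then (if i = 0 \<and> j = 1 then - \<i> else if i = 1 \<and> j = 0 then \<i> else 0)
       else if k = 3 then (if i = j then (if i = 0 then 1 else -1) else 0)
       else 0)
    else 0)"

definition tensor :: "qmat \<Rightarrow> qmat \<Rightarrow> qqmat" where
  "tensor A B = (\<lambda>(i, k) (j, l). A i j * B k l)"

definition Id2 :: qqmat where "Id2 = tensor id1 id1"
definition sig :: "nat \<Rightarrow> qqmat" where "sig k = tensor (pauli k) id1"
definition tau :: "nat \<Rightarrow> qqmat" where "tau k = tensor id1 (pauli k)"
definition sigtau :: "nat \<Rightarrow> nat \<Rightarrow> qqmat" where "sigtau k l = tensor (pauli k) (pauli l)"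

definition mmult2 :: "qqmat \<Rightarrow> qqmat \<Rightarrow> qqmat" where
  "mmult2 M N = (\<lambda>p q. \<Sum>r\<in>idx2. M p r * N r q)"

definition trace2 :: "qqmat \<Rightarrow> complex" where
  "trace2 M = (\<Sum>p\<in>idx2. M p p)"

definition Sigma0 :: "real \<Rightarrow> real \<Rightarrow> qqmat" where
  "Sigma0 g1 g2 = (\<lambda>p q. (1/2) * (Id2 p q
     + complex_of_real (cos g1 * cos g2) * sig 3 p q
     + complex_of_real (sin g1 * sin g2) * tau 3 p q
     + complex_of_real (sin g1 * cos g2) * sigtau 1 1 p q
     + complex_of_real (cos g1 * sin g2) * sigtau 2 2 p q))"

definition Sigma1 :: "real \<Rightarrow> real \<Rightarrow> qqmat" where
  "Sigma1 g1 g2 = (\<lambda>p q. (1/2) * (complex_of_real (sin g1) * sig 1 p q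
     + complex_of_real (cos g2) * tau 1 p q
     + complex_of_real (sin g2) * sigtau 1 3 p q
     + complex_of_real (cos g1) * sigtau 3 1 p q))"

definition Sigma2 :: "real \<Rightarrow> real \<Rightarrow> qqmat" where
  "Sigma2 g1 g2 = (\<lambda>p q. (1/2) * (complex_of_real (sin g2) * sig 2 p q
     + complex_of_real (cos g1) * tau 2 p q
     + complex_of_real (sin g1) * sigtau 2 3 p q
     + complex_of_real (cos g2) * sigtau 3 2 p q))"

definition Sigma3 :: "real \<Rightarrow> real \<Rightarrow> qqmat" where
  "Sigma3 g1 g2 = (\<lambda>p q. (1/2) * (complex_of_real (sin g1 * sin g2) * sig 3 p q
     + complex_of_real (cos g1 * cos g2) * tau 3 p q
     - complex_of_real (cos g1 * sin g2) * sigtau 1 1 p q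
     - complex_of_real (sin g1 * cos g2) * sigtau 2 2 p q
     + sigtau 3 3 p q))"

definition unit_vec1 :: "(nat \<Rightarrow> complex) \<Rightarrow> bool" where
  "unit_vec1 \<psi> \<longleftrightarrow> (\<Sum>i\<in>idx1. (cmod (\<psi> i))\<^sup>2) = 1"

definition proj1 :: "(nat \<Rightarrow> complex) \<Rightarrow> qmat" where
  "proj1 \<psi> = (\<lambda>i j. if i < 2 \<and> j < 2 then \<psi> i * cnj (\<psi> j) else 0)"

definition pure_state1 :: "qmat \<Rightarrow> bool" where
  "pure_state1 R \<longleftrightarrow> (\<exists>\<psi>. unit_vec1 \<psi> \<and> R = proj1 \<psi>)"

text \<open>g(rho) = max tr[rho (rho1 (x) rho2)] over pure rho1, rho2 (the trace is real for
  Hermitian rho; we take its real part; the supremum is attained, so Sup = max).\<close>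
definition gmax :: "qqmat \<Rightarrow> real" where
  "gmax \<rho> = Sup {Re (trace2 (mmult2 \<rho> (tensor R1 R2))) | R1 R2. pure_state1 R1 \<and> pure_state1 R2}"

definition rhoW :: "real \<Rightarrow> real \<Rightarrow> qqmat" where
  "rhoW x1 x2 = (\<lambda>p q. (1/2) * (Sigma0 (pi/4) (pi/4) p q
     + complex_of_real x1 * Sigma1 (pi/4) (pi/4) p q
     + complex_of_real x2 * Sigma2 (pi/4) (pi/4) p q
     - (1/3) * Sigma3 (pi/4) (pi/4) p q))"

definition ket2 :: "nat \<Rightarrow> nat \<Rightarrow> nat \<times> nat \<Rightarrow> complex" where
  "ket2 i j = (\<lambda>p. if p = (i, j) then 1 else 0)"

definition outer2 :: "(nat \<times> nat \<Rightarrow> complex) \<Rightarrow> (nat \<times> nat \<Rightarrow> complex) \<Rightarrow> qqmat" where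
  "outer2 a b = (\<lambda>p q. if p \<in> idx2 \<and> q \<in> idx2 then a p * cnj (b q) else 0)"

definition psi_plus :: "nat \<times> nat \<Rightarrow> complex" where
  "psi_plus = (\<lambda>p. complex_of_real (1 / sqrt 2) * (ket2 0 1 p + ket2 1 0 p))"

end

theory Submission
  imports Defs
begin

lemma idx2_eq: "idx2 = {(0,0),(0,1),(1,0),(1,1)}"
  unfolding idx2_def idx1_def by auto

lemma rhoW_eval:
  fixes x1 x2 :: real
  defines "s \<equiv> (complex_of_real x1 - \<i> * complex_of_real x2) * complex_of_real (sqrt 2 / 4)"
  shows "rhoW x1 x2 (0,0) (0,0) = 1/3" "rhoW x1 x2 (0,1) (0,1) = 1/3" "rhoW x1 x2 (1,0) (1,0) = 1/3"
    "rhoW x1 x2 (0,1) (1,0) = 1/3" "rhoW x1 x2 (1,0) (0,1) = 1/3"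
    "rhoW x1 x2 (0,0) (0,1) = s" "rhoW x1 x2 (0,0) (1,0) = s"
    "rhoW x1 x2 (0,1) (0,0) = cnj s" "rhoW x1 x2 (1,0) (0,0) = cnj s"
    "rhoW x1 x2 (1,1) (j,l) = 0" "rhoW x1 x2 (j,l) (1,1) = 0"
    "rhoW x1 x2 (0,1) (1,1) = 0" 
  unfolding s_def rhoW_def Sigma0_def Sigma1_def Sigma2_def Sigma3_def sig_def tau_def sigtau_def Id2_def tensor_def pauli_def id1_def sin_45 cos_45
  apply (simp_all add: field_simps)
  done

lemma trace_formula:
  fixes x1 x2 :: real and a b :: "nat \<Rightarrow> complex"
  defines "s \<equiv> (complex_of_real x1 - \<i> * complex_of_real x2) * complex_of_real (sqrt 2 / 4)"
  defines "A \<equiv> a 0 * b 0" and "B \<equiv> a 0 * b 1" and "C \<equiv> a 1 * b 0"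
  shows "trace2 (mmult2 (rhoW x1 x2) (tensor (proj1 a) (proj1 b)))
     = (1/3)*(A*cnj A) + (1/3)*((B+C)*cnj(B+C)) + s*(B+C)*cnj A + cnj s * cnj(B+C) * A"
  unfolding trace2_def mmult2_def idx2_eq
  apply (simp add: rhoW_eval[of x1 x2, folded s_def, unfolded One_nat_def] tensor_def proj1_def)
  unfolding A_def B_def C_def
  apply (simp add: algebra_simps)
  done
definition sW :: "real \<Rightarrow> real \<Rightarrow> complex" where
  "sW x1 x2 = (complex_of_real x1 - \<i> * complex_of_real x2) * complex_of_real (sqrt 2 / 4)"

lemma gen_re:
  fixes A X s :: complex
  shows "Re ((1/3)*(A*cnj A) + (1/3)*(X*cnj X) + s*X*cnj A + cnj s*cnj X*A)
     = (1/3)*(cmod A)^2 + (1/3)*(cmod X)^2 + 2*Re(s*X*cnj A)"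
proof -
  have 1: "A*cnj A = of_real ((cmod A)^2)" "X*cnj X = of_real ((cmod X)^2)"
    by (simp_all add: complex_norm_square[symmetric] del: of_real_power)
  have 2: "cnj s*cnj X*A = cnj(s*X*cnj A)" by simp
  show ?thesis unfolding 1 2 by (simp add: algebra_simps)
qed

lemma val_formula:
  "Re (trace2 (mmult2 (rhoW x1 x2) (tensor (proj1 a) (proj1 b))))
   = (1/3) * (cmod (a 0 * b 0))^2 + (1/3) * (cmod (a 0 * b 1 + a 1 * b 0))^2
     + 2 * Re (sW x1 x2 * (a 0 * b 1 + a 1 * b 0) * cnj (a 0 * b 0))"
  unfolding trace_formula[of x1 x2 a b, folded sW_def] gen_re ..
lemma unit_sq: "unit_vec1 a \<Longrightarrow> (cmod (a 0))^2 + (cmod (a 1))^2 = 1"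
  unfolding unit_vec1_def idx1_def by (simp add: numeral_2_eq_2)

lemma unit_le1: assumes "unit_vec1 a" shows "cmod (a 0) \<le> 1" "cmod (a 1) \<le> 1"
proof -
  have h: "(cmod (a 0))^2 + (cmod (a 1))^2 = 1" using unit_sq[OF assms] .
  have "(cmod (a 0))^2 \<le> 1" "(cmod (a 1))^2 \<le> 1"
    using h zero_le_power2[of "cmod (a 0)"] zero_le_power2[of "cmod (a 1)"] by linarith+
  then show "cmod (a 0) \<le> 1" "cmod (a 1) \<le> 1" by (simp_all add: abs_square_le_1)
qed

lemma real_ub:
  fixes p0 p1 q0 q1 :: real
  assumes "p0\<^sup>2+p1\<^sup>2=1" "q0\<^sup>2+q1\<^sup>2=1"
  shows "(p0*q0)^2 + (p0*q1+p1*q0)^2 \<le> 4/3"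
proof -
  have "(p0\<^sup>2+p1\<^sup>2)*(q0\<^sup>2+q1\<^sup>2) = 1" using assms by simp
  then show ?thesis
  proof -
    have "4*((p0\<^sup>2+p1\<^sup>2)*(q0\<^sup>2+q1\<^sup>2)) - 3*((p0*q0)^2 + (p0*q1+p1*q0)^2)
       = (p0*q0 - 2*p1*q1)^2 + (p0*q1 - p1*q0)^2" by (simp add: power2_eq_square algebra_simps)
    moreover have "(p0*q0 - 2*p1*q1)^2 + (p0*q1 - p1*q0)^2 \<ge> 0" by simp
    ultimately have "4 - 3*((p0*q0)^2 + (p0*q1+p1*q0)^2) \<ge> 0"
      using \<open>(p0\<^sup>2+p1\<^sup>2)*(q0\<^sup>2+q1\<^sup>2) = 1\<close> by simp
    then show ?thesis by simp
  qed
qed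

lemma sW0: "sW 0 0 = 0" unfolding sW_def by simp

lemma bound0:
  assumes "unit_vec1 a" "unit_vec1 b"
  shows "Re (trace2 (mmult2 (rhoW 0 0) (tensor (proj1 a) (proj1 b)))) \<le> 4/9"
proof -
  have X: "cmod (a 0 * b 1 + a 1 * b 0) \<le> cmod (a 0) * cmod (b 1) + cmod (a 1) * cmod (b 0)"
    by (metis norm_mult norm_triangle_ineq)
  have X2: "(cmod (a 0 * b 1 + a 1 * b 0))^2 \<le> (cmod (a 0) * cmod (b 1) + cmod (a 1) * cmod (b 0))^2"
    using X by (simp add: power_mono)
  have "(cmod (a 0) * cmod (b 0))^2 + (cmod (a 0) * cmod (b 1) + cmod (a 1) * cmod (b 0))^2 \<le> 4/3"
    by (rule real_ub[OF unit_sq[OF assms(1)] unit_sq[OF assms(2)]])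
  moreover have "Re (trace2 (mmult2 (rhoW 0 0) (tensor (proj1 a) (proj1 b))))
     = (1/3) * (cmod (a 0) * cmod (b 0))^2 + (1/3) * (cmod (a 0 * b 1 + a 1 * b 0))^2"
    unfolding val_formula sW0 norm_mult[of "a 0" "b 0"] by simp
  ultimately show ?thesis using X2 by linarith
qed

lemma boundx:
  assumes "unit_vec1 a" "unit_vec1 b"
  shows "Re (trace2 (mmult2 (rhoW x1 x2) (tensor (proj1 a) (proj1 b)))) \<le> 4/9 + 4 * cmod (sW x1 x2)"
proof -
  have v0: "Re (trace2 (mmult2 (rhoW 0 0) (tensor (proj1 a) (proj1 b)))) \<le> 4/9" by (rule bound0[OF assms])
  have X: "cmod (a 0 * b 1 + a 1 * b 0) \<le> 2"
  proof -
    have "cmod (a 0 * b 1 + a 1 * b 0) \<le> cmod (a 0) * cmod (b 1) + cmod (a 1) * cmod (b 0)"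
      by (metis norm_mult norm_triangle_ineq)
    moreover have "cmod (a 0) * cmod (b 1) \<le> 1" using unit_le1[OF assms(1)] unit_le1[OF assms(2)]
      by (simp add: mult_le_one)
    moreover have "cmod (a 1) * cmod (b 0) \<le> 1" using unit_le1[OF assms(1)] unit_le1[OF assms(2)]
      by (simp add: mult_le_one)
    ultimately show ?thesis by linarith
  qed
  have A: "cmod (a 0 * b 0) \<le> 1" using unit_le1[OF assms(1)] unit_le1[OF assms(2)]
      by (simp add: mult_le_one norm_mult)
  have "Re (sW x1 x2 * (a 0 * b 1 + a 1 * b 0) * cnj (a 0 * b 0))
       \<le> cmod (sW x1 x2 * (a 0 * b 1 + a 1 * b 0) * cnj (a 0 * b 0))" by (rule complex_Re_le_cmod)
  also have "\<dots> = cmod (sW x1 x2) * cmod (a 0 * b 1 + a 1 * b 0) * cmod (a 0 * b 0)"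
    by (simp add: norm_mult)
  also have "\<dots> \<le> cmod (sW x1 x2) * 2 * 1"
    using X A by (intro mult_mono) auto
  finally have "Re (sW x1 x2 * (a 0 * b 1 + a 1 * b 0) * cnj (a 0 * b 0)) \<le> 2 * cmod (sW x1 x2)" by simp
  then show ?thesis using v0 unfolding val_formula sW0 by simp
qed

definition wv :: "real \<Rightarrow> real \<Rightarrow> complex \<Rightarrow> nat \<Rightarrow> complex" where
  "wv c0 c1 z = (\<lambda>i. if i = 0 then complex_of_real c0 else if i = 1 then complex_of_real c1 * z else 0)"

lemma wv_unit: "c0\<^sup>2 + c1\<^sup>2 = 1 \<Longrightarrow> cmod z = 1 \<Longrightarrow> unit_vec1 (wv c0 c1 z)"
  unfolding unit_vec1_def idx1_def wv_def by (simp add: numeral_2_eq_2 norm_mult)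

lemma wv_val:
  assumes "cmod z = 1"
  shows "Re (trace2 (mmult2 (rhoW x1 x2) (tensor (proj1 (wv c0 c1 z)) (proj1 (wv c0 c1 z)))))
    = (1/3)*c0^4 + (4/3)*c0^2*c1^2 + 4*c0^3*c1 * Re (sW x1 x2 * z)"
proof -
  have X: "wv c0 c1 z 0 * wv c0 c1 z 1 + wv c0 c1 z 1 * wv c0 c1 z 0 = complex_of_real (2*c0*c1) * z"
    unfolding wv_def by simp
  have A: "wv c0 c1 z 0 * wv c0 c1 z 0 = complex_of_real (c0^2)" unfolding wv_def by (simp add: power2_eq_square)
  have r: "sW x1 x2 * (complex_of_real (2*c0*c1) * z) * cnj (complex_of_real (c0^2))
     = complex_of_real (2*c0^3*c1) * (sW x1 x2 * z)"
    by (simp add: algebra_simps power2_eq_square power3_eq_cube)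
  show ?thesis unfolding val_formula X A r
    by (simp add: norm_mult assms power_mult_distrib algebra_simps power4_eq_xxxx power2_eq_square)
qed
lemma pauli_out: "\<not> (i<2 \<and> j<2) \<Longrightarrow> pauli n i j = 0" unfolding pauli_def by auto
lemma id1_out: "\<not> (i<2 \<and> j<2) \<Longrightarrow> id1 i j = 0" unfolding id1_def by auto

lemma rhoW_out: "\<not>(i<2 \<and> k<2 \<and> j<2 \<and> l<2) \<Longrightarrow> rhoW x1 x2 (i,k) (j,l) = 0"
proof -
  assume a: "\<not>(i<2 \<and> k<2 \<and> j<2 \<and> l<2)"
  have t: "\<And>A B. (\<And>i j. \<not> (i<2 \<and> j<2) \<Longrightarrow> A i j = 0) \<Longrightarrow> (\<And>i j. \<not> (i<2 \<and> j<2) \<Longrightarrow> B i j = 0)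
     \<Longrightarrow> tensor A B (i,k) (j,l) = 0"
    using a unfolding tensor_def by auto
  have z: "\<And>n m. tensor (pauli n) (pauli m) (i,k) (j,l) = 0" "\<And>n. tensor (pauli n) id1 (i,k) (j,l) = 0"
     "\<And>n. tensor id1 (pauli n) (i,k) (j,l) = 0" "tensor id1 id1 (i,k) (j,l) = 0"
    by (rule t; simp add: pauli_out id1_out)+
  show ?thesis
    unfolding rhoW_def Sigma0_def Sigma1_def Sigma2_def Sigma3_def sig_def tau_def sigtau_def Id2_def
    by (simp only: z) simp
qed

lemma rho00: "rhoW 0 0 = (\<lambda>p q. (1/3) * outer2 (ket2 0 0) (ket2 0 0) p q
                          + (2/3) * outer2 psi_plus psi_plus p q)"
proof (intro ext)
  fix p q :: "nat \<times> nat"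
  obtain i k j l where pq: "p=(i,k)" "q=(j,l)" by (cases p, cases q) auto
  have s2: "complex_of_real (1 / sqrt 2) * complex_of_real (1 / sqrt 2) = 1/2"
    by (simp flip: of_real_mult)
  have s3: "complex_of_real (sqrt 2) * complex_of_real (sqrt 2) = 2"
    by (simp flip: of_real_mult)
  show "rhoW 0 0 p q = (1/3) * outer2 (ket2 0 0) (ket2 0 0) p q + (2/3) * outer2 psi_plus psi_plus p q"
  proof (cases "i<2 \<and> k<2 \<and> j<2 \<and> l<2")
    case True
    then have "i \<in> {0,1}" "k \<in> {0,1}" "j \<in> {0,1}" "l \<in> {0,1}" by auto
    then show ?thesis
      by (auto simp: pq outer2_def ket2_def psi_plus_def idx2_def idx1_def s2 s3 mult.assoc[symmetric]
          rhoW_eval[of 0 0] rhoW_eval[of 0 0, unfolded One_nat_def])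
  next
    case False
    then show ?thesis using rhoW_out[OF False, of 0 0]
      by (auto simp: pq outer2_def idx2_def idx1_def)
  qed
qed
definition S :: "real \<Rightarrow> real \<Rightarrow> real set" where
  "S x1 x2 = {Re (trace2 (mmult2 (rhoW x1 x2) (tensor R1 R2))) | R1 R2. pure_state1 R1 \<and> pure_state1 R2}"

lemma gmax_S: "gmax (rhoW x1 x2) = Sup (S x1 x2)" unfolding gmax_def S_def ..

lemma S_elem: "v \<in> S x1 x2 \<Longrightarrow> \<exists>a b. unit_vec1 a \<and> unit_vec1 b \<and>
   v = Re (trace2 (mmult2 (rhoW x1 x2) (tensor (proj1 a) (proj1 b))))"
  unfolding S_def pure_state1_def by blast

lemma S_intro: "unit_vec1 a \<Longrightarrow> unit_vec1 b \<Longrightarrow>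
   Re (trace2 (mmult2 (rhoW x1 x2) (tensor (proj1 a) (proj1 b)))) \<in> S x1 x2"
  unfolding S_def pure_state1_def by blast

definition c0 :: real where "c0 = sqrt (2/3)"
definition c1 :: real where "c1 = sqrt (1/3)"

lemma c_facts: "c0^2 = 2/3" "c1^2 = 1/3" "c0\<^sup>2 + c1\<^sup>2 = 1" "c0 > 0" "c1 > 0"
  unfolding c0_def c1_def by auto

lemma wv_val2:
  assumes "cmod z = 1"
  shows "Re (trace2 (mmult2 (rhoW x1 x2) (tensor (proj1 (wv c0 c1 z)) (proj1 (wv c0 c1 z)))))
    = 4/9 + 4*c0^3*c1 * Re (sW x1 x2 * z)"
proof -
  have e: "c0^4 = (c0^2)^2" "c0^2*c1^2 = (c0^2)*(c1^2)" by (simp_all add: power_mult_distrib flip: power_mult)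
  have "(1/3)*c0^4 + (4/3)*c0^2*c1^2 = 4/9" unfolding e c_facts(1,2) by (simp add: power2_eq_square)
  then show ?thesis unfolding wv_val[OF assms] by simp
qed

lemma gmax0: "gmax (rhoW 0 0) = 4/9"
  unfolding gmax_S
proof (rule cSup_eq_maximum)
  have "cmod (1::complex) = 1" by simp
  from S_intro[OF wv_unit[OF c_facts(3) this] wv_unit[OF c_facts(3) this], of 0 0]
  show "4/9 \<in> S 0 0" unfolding wv_val2[OF \<open>cmod (1::complex) = 1\<close>] sW0 by simp
next
  fix v assume "v \<in> S 0 0"
  then show "v \<le> 4/9" using S_elem bound0 by blast
qed

lemma sW_nz: "x1\<^sup>2 + x2\<^sup>2 > 0 \<Longrightarrow> sW x1 x2 \<noteq> 0"
proof
  assume h: "x1\<^sup>2 + x2\<^sup>2 > 0" "sW x1 x2 = 0"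
  then have "Re (sW x1 x2) = 0" "Im (sW x1 x2) = 0" by auto
  then have "x1 = 0" "x2 = 0" unfolding sW_def by auto
  then show False using h by simp
qed

lemma gmax_gt:
  assumes "x1\<^sup>2 + x2\<^sup>2 > 0"
  shows "gmax (rhoW x1 x2) > 4/9"
proof -
  define s where "s = sW x1 x2"
  have s0: "s \<noteq> 0" using sW_nz[OF assms] s_def by simp
  define z where "z = cnj s / complex_of_real (cmod s)"
  have z1: "cmod z = 1" using s0 unfolding z_def by (simp add: norm_divide)
  have "s * z = complex_of_real (cmod s)"
    using s0 unfolding z_def by (simp add: complex_norm_square[symmetric] power2_eq_square field_simps del: of_real_power)
  then have Rsz: "Re (s * z) = cmod s" by simp
  have pos: "4*c0^3*c1 * cmod s > 0" using s0 c_facts by simp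
  have mem: "4/9 + 4*c0^3*c1 * Re (s * z) \<in> S x1 x2"
    using S_intro[OF wv_unit[OF c_facts(3) z1] wv_unit[OF c_facts(3) z1], of x1 x2]
    unfolding wv_val2[OF z1] s_def .
  have bdd: "bdd_above (S x1 x2)"
    unfolding bdd_above_def using S_elem boundx by blast
  have "4/9 + 4*c0^3*c1 * Re (s * z) \<le> Sup (S x1 x2)" by (rule cSup_upper[OF mem bdd])
  then show ?thesis unfolding gmax_S Rsz using pos by linarith
qed

theorem mainTheorem6:
  shows "rhoW 0 0 = (\<lambda>p q. (1/3) * outer2 (ket2 0 0) (ket2 0 0) p q
                          + (2/3) * outer2 psi_plus psi_plus p q)
    \<and> gmax (rhoW 0 0) = 4/9
    \<and> (\<forall>x1 x2 :: real. x1\<^sup>2 + x2\<^sup>2 + 1/9 \<le> 1 \<and> x1\<^sup>2 + x2\<^sup>2 > 0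
          \<longrightarrow> gmax (rhoW x1 x2) > gmax (rhoW 0 0))"
proof (intro conjI allI impI)
  show "rhoW 0 0 = (\<lambda>p q. (1/3) * outer2 (ket2 0 0) (ket2 0 0) p q
                          + (2/3) * outer2 psi_plus psi_plus p q)" by (rule rho00)
  show "gmax (rhoW 0 0) = 4/9" by (rule gmax0)
  fix x1 x2 :: real
  assume "x1\<^sup>2 + x2\<^sup>2 + 1/9 \<le> 1 \<and> x1\<^sup>2 + x2\<^sup>2 > 0"
  then show "gmax (rhoW x1 x2) > gmax (rhoW 0 0)" unfolding gmax0 using gmax_gt by blast
qed
end
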